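(* Let $J$ be a finite poset on $\{1,\dots,n\}$, $p\in\{1,\dots,n\}$, and let $J_p\subseteq J$ be an inward or outward $p$-anchored path of $J$. Then $J$ and $\delta_{J_p}J$ are strongly Gram $\mathbb Z$-congruent, i.e. there is $B\in GL(n,\mathbb Z)$ with $C_J=B^{tr}C_{\delta_{J_p}J}B$. In particular, $J$ is non-negative of corank $r\ge0$ if and only if $\delta_{J_p}J$ is non-negative of corank $r$.
   Context: For a finite poset $I$ on $\{1,\dots,n\}$: $C_I=[c_{ij}]$ with $c_{ij}=1$ iff $i\preceq_I j$ (else $0$); $G_I=\tfrac12(C_I+C_I^{tr})$; $I$ is non-negative of corank $r$ if $G_I$ is positive semi-definite of rank $n-r$. $\mathcal H(I)$ is the Hasse digraph (arrow $i\to j$ iff $i\prec_I j$ with no element strictly between). $GL(n,\mathbb Z)$ is the set of integer matrices with determinant $\pm1$. A subset $J_p\subseteq J$ with $p\in J_p$ is a $p$-anchored path if: the digraph $\mathcal H(J)$ with vertex $p$ deleted is disconnected, $J_p\setminus\{p\}$ is the vertex set of one of its connected components (so the vertices of $J_p\setminus\{p\}$ are adjacent in $\mathcal H(J)$ only to vertices of $J_p$), the subdigraph of $\mathcal H(J)$ induced on $J_p$ has a path as underlying graph, and $p$ has degree $1$ in it. It is inward (resp. outward) if $p$ is the unique maximal (resp. minimal) element of $J_p$ with the induced order. For such $J_p$, $\delta_{J_p}J$ is the poset on $\{1,\dots,n\}$ whose Hasse digraph is obtained from $\mathcal H(J)$ by reversing all arrows between vertices of $J_p$. *)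

theory Defs
  imports "HOL-Analysis.Analysis"
begin

text \<open>A finite poset on the ground set (a finite type 'n of cardinality n, playing the role
of {1,...,n}) is a relation R with (i,j) in R iff i is below-or-equal j.\<close>

definition is_poset :: "('n::finite \<times> 'n) set \<Rightarrow> bool" where
  "is_poset R \<longleftrightarrow> partial_order_on UNIV R"

definition incid_mat :: "('n::finite \<times> 'n) set \<Rightarrow> int^'n^'n" where
  "incid_mat R = (\<chi> i j. if (i, j) \<in> R then 1 else 0)"

definition gram_mat :: "('n::finite \<times> 'n) set \<Rightarrow> real^'n^'n" where
  "gram_mat R = (\<chi> i j. (real_of_int (incid_mat R $ i $ j) + real_of_int (incid_mat R $ j $ i)) / 2)"

definition psd :: "real^'n^'n \<Rightarrow> bool" where
  "psd G \<longleftrightarrow> (\<forall>x. 0 \<le> x \<bullet> (G *v x))"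

definition nonneg_corank :: "('n::finite \<times> 'n) set \<Rightarrow> nat \<Rightarrow> bool" where
  "nonneg_corank R r \<longleftrightarrow> psd (gram_mat R) \<and> rank (gram_mat R) + r = CARD('n)"

definition hasse :: "('n \<times> 'n) set \<Rightarrow> ('n \<times> 'n) set" where
  "hasse R = {(i, j). (i, j) \<in> R \<and> i \<noteq> j \<and>
      \<not> (\<exists>k. (i, k) \<in> R \<and> (k, j) \<in> R \<and> k \<noteq> i \<and> k \<noteq> j)}"

definition hadj :: "('n \<times> 'n) set \<Rightarrow> 'n \<Rightarrow> 'n \<Rightarrow> bool" where
  "hadj R x y \<longleftrightarrow> (x, y) \<in> hasse R \<or> (y, x) \<in> hasse R"

definition adj_on :: "('n \<times> 'n) set \<Rightarrow> 'n set \<Rightarrow> ('n \<times> 'n) set" where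
  "adj_on R V = {(x, y). x \<in> V \<and> y \<in> V \<and> hadj R x y}"

definition connected_on :: "('n \<times> 'n) set \<Rightarrow> 'n set \<Rightarrow> bool" where
  "connected_on R V \<longleftrightarrow> (\<forall>x\<in>V. \<forall>y\<in>V. (x, y) \<in> (adj_on R V)\<^sup>*)"

definition is_component_on :: "('n \<times> 'n) set \<Rightarrow> 'n set \<Rightarrow> 'n set \<Rightarrow> bool" where
  "is_component_on R V S \<longleftrightarrow> S \<noteq> {} \<and> S \<subseteq> V \<and> connected_on R S \<and>
      (\<forall>x\<in>S. \<forall>y\<in>V. hadj R x y \<longrightarrow> y \<in> S)"

definition is_path_graph_on :: "('n \<times> 'n) set \<Rightarrow> 'n set \<Rightarrow> bool" where
  "is_path_graph_on R V \<longleftrightarrow> (\<exists>vs. distinct vs \<and> set vs = V \<and>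
      (\<forall>x\<in>V. \<forall>y\<in>V. hadj R x y \<longleftrightarrow>
          (\<exists>i. Suc i < length vs \<and> {vs ! i, vs ! Suc i} = {x, y})))"

definition anchored_path :: "('n::finite \<times> 'n) set \<Rightarrow> 'n \<Rightarrow> 'n set \<Rightarrow> bool" where
  "anchored_path R p Jp \<longleftrightarrow> p \<in> Jp \<and>
      \<not> connected_on R (UNIV - {p}) \<and>
      is_component_on R (UNIV - {p}) (Jp - {p}) \<and>
      is_path_graph_on R Jp \<and>
      card {y \<in> Jp. hadj R p y} = 1"

definition is_maximal_in :: "('n \<times> 'n) set \<Rightarrow> 'n set \<Rightarrow> 'n \<Rightarrow> bool" where
  "is_maximal_in R S x \<longleftrightarrow> x \<in> S \<and> \<not> (\<exists>y\<in>S. y \<noteq> x \<and> (x, y) \<in> R)"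

definition is_minimal_in :: "('n \<times> 'n) set \<Rightarrow> 'n set \<Rightarrow> 'n \<Rightarrow> bool" where
  "is_minimal_in R S x \<longleftrightarrow> x \<in> S \<and> \<not> (\<exists>y\<in>S. y \<noteq> x \<and> (y, x) \<in> R)"

definition inward_anchored_path :: "('n::finite \<times> 'n) set \<Rightarrow> 'n \<Rightarrow> 'n set \<Rightarrow> bool" where
  "inward_anchored_path R p Jp \<longleftrightarrow> anchored_path R p Jp \<and>
      is_maximal_in R Jp p \<and> (\<forall>x. is_maximal_in R Jp x \<longrightarrow> x = p)"

definition outward_anchored_path :: "('n::finite \<times> 'n) set \<Rightarrow> 'n \<Rightarrow> 'n set \<Rightarrow> bool" where
  "outward_anchored_path R p Jp \<longleftrightarrow> anchored_path R p Jp \<and>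
      is_minimal_in R Jp p \<and> (\<forall>x. is_minimal_in R Jp x \<longrightarrow> x = p)"

text \<open>delta_{Jp} R: the poset whose Hasse digraph is that of R with all arrows between
vertices of Jp reversed; a finite poset is the reflexive-transitive closure of its
Hasse digraph, so it is given by that closure.\<close>
definition reversed_hasse :: "('n \<times> 'n) set \<Rightarrow> 'n set \<Rightarrow> ('n \<times> 'n) set" where
  "reversed_hasse R Jp =
     {(i, j). (i, j) \<in> hasse R \<and> \<not> (i \<in> Jp \<and> j \<in> Jp)} \<union>
     {(j, i) | i j. (i, j) \<in> hasse R \<and> i \<in> Jp \<and> j \<in> Jp}"

definition delta :: "'n set \<Rightarrow> ('n \<times> 'n) set \<Rightarrow> ('n \<times> 'n) set" where
  "delta Jp R = (reversed_hasse R Jp)\<^sup>*"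

definition strongly_gram_Z_congruent :: "('n::finite \<times> 'n) set \<Rightarrow> ('n \<times> 'n) set \<Rightarrow> bool" where
  "strongly_gram_Z_congruent J K \<longleftrightarrow>
     (\<exists>B :: int^'n^'n. (det B = 1 \<or> det B = -1) \<and>
        incid_mat J = transpose B ** incid_mat K ** B)"

end

theory Submission
  imports Defs
begin


definition Bm :: "('n::finite \<Rightarrow> 'n) \<Rightarrow> ('n \<Rightarrow> 'n) \<Rightarrow> ('n \<Rightarrow> bool) \<Rightarrow> 'a::comm_ring_1^'n^'n" where
  "Bm \<alpha> \<beta> g = (\<chi> r c. (if r = \<alpha> c then 1 else 0) - (if g c \<and> r = \<beta> c then 1 else 0))"

definition LinF :: "('n \<Rightarrow> 'n \<Rightarrow> 'a::comm_ring_1) \<Rightarrow> ('n \<Rightarrow> 'n) \<Rightarrow> ('n \<Rightarrow> 'n) \<Rightarrow> ('n \<Rightarrow> bool) \<Rightarrow> 'n \<Rightarrow> 'n \<Rightarrow> 'a" where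
  "LinF M \<alpha> \<beta> g i j = M (\<alpha> i) (\<alpha> j) - (if g j then M (\<alpha> i) (\<beta> j) else 0)
     - (if g i then M (\<beta> i) (\<alpha> j) else 0) + (if g i \<and> g j then M (\<beta> i) (\<beta> j) else 0)"

lemma mul01: "(x::'a::comm_ring_1) * (if P then 1 else 0) = (if P then x else 0)"
  "(if P then 1 else 0) * (x::'a::comm_ring_1) = (if P then x else 0)" by auto

lemma mul_Bm: "((M::'a::comm_ring_1^'n::finite^'m) ** Bm \<alpha> \<beta> g) $ r $ c = M$r$(\<alpha> c) - (if g c then M$r$(\<beta> c) else 0)"
  by (simp add: Bm_def matrix_matrix_mult_def right_diff_distrib sum_subtractf mul01 sum.delta if_distribR cong del: if_weak_cong)

lemma Bm_mul: "(transpose (Bm \<alpha> \<beta> g) ** (M::'a::comm_ring_1^'m::finite^'n::finite)) $ r $ c = M$(\<alpha> r)$c - (if g r then M$(\<beta> r)$c else 0)"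
  by (simp add: Bm_def transpose_def matrix_matrix_mult_def left_diff_distrib sum_subtractf mul01 sum.delta cong del: if_weak_cong)

lemma BmMBm: "(transpose (Bm \<alpha> \<beta> g) ** (M::'a::comm_ring_1^'n::finite^'n) ** Bm \<alpha> \<beta> g) $ i $ j
   = LinF (\<lambda>x y. M$x$y) \<alpha> \<beta> g i j"
  by (simp add: mul_Bm Bm_mul LinF_def algebra_simps)

lemma Bm_invol:
  assumes "\<And>c. \<not> g c \<Longrightarrow> \<alpha> c = c"
    and "\<And>c. g c \<Longrightarrow> \<not> g (\<alpha> c) \<and> \<alpha> (\<alpha> c) = \<alpha> c \<and> g (\<beta> c) \<and> \<alpha> (\<beta> c) = \<alpha> c \<and> \<beta> (\<beta> c) = c"
  shows "(Bm \<alpha> \<beta> g :: 'a::comm_ring_1^'n::finite^'n) ** Bm \<alpha> \<beta> g = mat 1"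
proof -
  { fix r c
    have "(Bm \<alpha> \<beta> g ** Bm \<alpha> \<beta> g :: 'a^'n^'n) $ r $ c = (mat 1 :: 'a^'n^'n) $ r $ c"
    proof (cases "g c")
      case True
      then show ?thesis using assms(2)[OF True] unfolding mul_Bm by (auto simp add: Bm_def mat_def)
    next
      case False
      then show ?thesis using assms(1)[OF False] unfolding mul_Bm by (auto simp add: Bm_def mat_def)
    qed }
  then show ?thesis by (simp add: vec_eq_iff)
qed

lemma LinF_transpose: "LinF (\<lambda>x y. M y x) \<alpha> \<beta> g i j = LinF M \<alpha> \<beta> g j i"
  by (simp add: LinF_def algebra_simps)




lemma po_refl: "partial_order_on UNIV R \<Longrightarrow> (x, x) \<in> R"
  by (auto simp: partial_order_on_def preorder_on_def refl_on_def)
lemma po_trans: "partial_order_on UNIV R \<Longrightarrow> (x, y) \<in> R \<Longrightarrow> (y, z) \<in> R \<Longrightarrow> (x, z) \<in> R"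
  unfolding partial_order_on_def preorder_on_def by (meson transD)
lemma po_antisym: "partial_order_on UNIV R \<Longrightarrow> (x, y) \<in> R \<Longrightarrow> (y, x) \<in> R \<Longrightarrow> x = y"
  unfolding partial_order_on_def by (meson antisymD)

lemma hasse_sub: "(x, y) \<in> hasse R \<Longrightarrow> (x, y) \<in> R \<and> x \<noteq> y"
  by (simp add: hasse_def)

lemma hasse_J: "(x, y) \<in> hasse R \<Longrightarrow> (x, y) \<in> R"
  by (simp add: hasse_def)
lemma hasse_ne: "(x, y) \<in> hasse R \<Longrightarrow> x \<noteq> y"
  by (simp add: hasse_def)

lemma po_hasse:
  fixes R :: "('n::finite \<times> 'n) set"
  assumes po: "partial_order_on UNIV R"
  shows "R = (hasse R)\<^sup>*"
proof
  show "(hasse R)\<^sup>* \<subseteq> R"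
  proof
    fix z assume "z \<in> (hasse R)\<^sup>*"
    then obtain x y where z: "z = (x, y)" and xy: "(x, y) \<in> (hasse R)\<^sup>*" by (cases z) auto
    from xy have "(x, y) \<in> R"
      by (induction rule: rtrancl_induct) (auto intro: po_refl[OF po] po_trans[OF po] dest: hasse_sub)
    then show "z \<in> R" using z by simp
  qed
next
  { fix n :: nat
    have "\<And>x y. card {z. (x, z) \<in> R \<and> (z, y) \<in> R} = n \<Longrightarrow> (x, y) \<in> R \<Longrightarrow> (x, y) \<in> (hasse R)\<^sup>*"
    proof (induction n rule: less_induct)
      case (less n x y)
      show ?case
      proof (cases "x = y")
        case True then show ?thesis by simp
      next
        case xy: False
        show ?thesis
        proof (cases "(x, y) \<in> hasse R")
          case True then show ?thesis by simp
        next
          case False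
          then obtain k where k: "(x, k) \<in> R" "(k, y) \<in> R" "k \<noteq> x" "k \<noteq> y"
            using less.prems(2) xy by (auto simp: hasse_def)
          have sub1: "{z. (x, z) \<in> R \<and> (z, k) \<in> R} \<subset> {z. (x, z) \<in> R \<and> (z, y) \<in> R}"
          proof -
            have "{z. (x, z) \<in> R \<and> (z, k) \<in> R} \<subseteq> {z. (x, z) \<in> R \<and> (z, y) \<in> R}"
              using k po_trans[OF po] by blast
            moreover have "y \<notin> {z. (x, z) \<in> R \<and> (z, k) \<in> R}"
              using k po_antisym[OF po] by blast
            moreover have "y \<in> {z. (x, z) \<in> R \<and> (z, y) \<in> R}"
              using less.prems(2) po_refl[OF po] by blast
            ultimately show ?thesis by blast
          qed
          have sub2: "{z. (k, z) \<in> R \<and> (z, y) \<in> R} \<subset> {z. (x, z) \<in> R \<and> (z, y) \<in> R}"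
          proof -
            have "{z. (k, z) \<in> R \<and> (z, y) \<in> R} \<subseteq> {z. (x, z) \<in> R \<and> (z, y) \<in> R}"
              using k po_trans[OF po] by blast
            moreover have "x \<notin> {z. (k, z) \<in> R \<and> (z, y) \<in> R}"
              using k po_antisym[OF po] by blast
            moreover have "x \<in> {z. (x, z) \<in> R \<and> (z, y) \<in> R}"
              using less.prems(2) po_refl[OF po] by blast
            ultimately show ?thesis by blast
          qed
          have "(x, k) \<in> (hasse R)\<^sup>*"
            using less.IH[OF _ refl k(1)] psubset_card_mono[OF finite sub1] less.prems(1) by simp
          moreover have "(k, y) \<in> (hasse R)\<^sup>*"
            using less.IH[OF _ refl k(2)] psubset_card_mono[OF finite sub2] less.prems(1) by simp
          ultimately show ?thesis by simp
        qed
      qed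
    qed }
  then show "R \<subseteq> (hasse R)\<^sup>*" by auto
qed




lemma psd_cong: assumes "G = transpose P ** H ** P" "psd H" shows "psd G"
  unfolding psd_def
proof
  fix x :: "real^'a"
  have "G *v x = transpose P *v (H *v (P *v x))"
    using assms(1) by (simp add: matrix_vector_mul_assoc matrix_mul_assoc)
  also have "\<dots> = (H *v (P *v x)) v* P" by simp
  finally have "x \<bullet> (G *v x) = ((H *v (P *v x)) v* P) \<bullet> x" by (simp add: inner_commute)
  also have "\<dots> = (H *v (P *v x)) \<bullet> (P *v x)" by (simp add: dot_lmul_matrix)
  finally have "x \<bullet> (G *v x) = (P *v x) \<bullet> (H *v (P *v x))" by (simp add: inner_commute)
  then show "0 \<le> x \<bullet> (G *v x)" using assms(2) unfolding psd_def by simp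
qed

lemma rank_cong: assumes "G = transpose P ** H ** P" shows "rank G \<le> rank (H::real^'n^'n)"
  using assms rank_mul_le_left rank_mul_le_right order_trans by metis

lemma sym_cong: assumes "G = transpose P ** H ** P" "P ** P = mat 1"
  shows "H = transpose P ** G ** (P::'a::comm_ring_1^'n::finite^'n)"
proof -
  have "transpose P ** G ** P = transpose P ** transpose P ** H ** (P ** P)"
    using assms(1) by (simp add: matrix_mul_assoc)
  also have "\<dots> = transpose (P ** P) ** H ** (P ** P)" by (simp add: matrix_transpose_mul)
  finally show ?thesis using assms(2) by simp
qed

lemma final:
  fixes J K :: "('n::finite \<times> 'n) set"
  assumes i1: "\<And>c. \<not> g c \<Longrightarrow> \<alpha> c = c"
    and i2: "\<And>c. g c \<Longrightarrow> \<not> g (\<alpha> c) \<and> \<alpha> (\<alpha> c) = \<alpha> c \<and> g (\<beta> c) \<and> \<alpha> (\<beta> c) = \<alpha> c \<and> \<beta> (\<beta> c) = c"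
    and cong: "\<And>i j. incid_mat J $i$j = LinF (\<lambda>x y. incid_mat K $x$y) \<alpha> \<beta> g i j"
  shows "strongly_gram_Z_congruent J K \<and> (\<forall>r. nonneg_corank J r \<longleftrightarrow> nonneg_corank K r)"
proof -
  define B where "B = (Bm \<alpha> \<beta> g :: int^'n^'n)"
  define R where "R = (Bm \<alpha> \<beta> g :: real^'n^'n)"
  have BB: "B ** B = mat 1" unfolding B_def by (rule Bm_invol[OF i1 i2])
  have RR: "R ** R = mat 1" unfolding R_def by (rule Bm_invol[OF i1 i2])
  have "det B * det B = 1" using BB det_mul[of B B] by simp
  then have dB: "det B = 1 \<or> det B = -1" by (simp add: square_eq_1_iff)
  have CJ: "incid_mat J = transpose B ** incid_mat K ** B"
    unfolding B_def by (simp add: vec_eq_iff BmMBm cong)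
  have GJ: "gram_mat J = transpose R ** gram_mat K ** R"
  proof -
    { fix i j
      have "gram_mat J $ i $ j = LinF (\<lambda>x y. gram_mat K $ x $ y) \<alpha> \<beta> g i j"
        unfolding gram_mat_def using cong[of i j] cong[of j i]
        by (cases "g i"; cases "g j") (simp_all add: LinF_def field_simps) }
    then show ?thesis unfolding R_def by (simp add: vec_eq_iff BmMBm)
  qed
  have GK: "gram_mat K = transpose R ** gram_mat J ** R" by (rule sym_cong[OF GJ RR])
  have "psd (gram_mat J) \<longleftrightarrow> psd (gram_mat K)" using psd_cong GJ GK by blast
  moreover have "rank (gram_mat J) = rank (gram_mat K)" using rank_cong[OF GJ] rank_cong[OF GK] by (rule antisym)
  ultimately show ?thesis unfolding strongly_gram_Z_congruent_def nonneg_corank_def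
    using dB CJ by auto
qed




locale inw =
  fixes J :: "('n::finite \<times> 'n) set" and p :: 'n and Jp :: "'n set" and vs :: "'n list"
  assumes po: "partial_order_on UNIV J"
    and dist: "distinct vs" and setvs: "set vs = Jp"
    and adjiff: "\<And>x y. x \<in> Jp \<Longrightarrow> y \<in> Jp \<Longrightarrow> hadj J x y \<longleftrightarrow> (\<exists>i. Suc i < length vs \<and> {vs!i, vs!Suc i} = {x,y})"
    and p0: "vs ! 0 = p" and nonempty: "vs \<noteq> []"
    and comp: "\<And>x y. x \<in> Jp - {p} \<Longrightarrow> hadj J x y \<Longrightarrow> y \<in> Jp"
    and maxp: "\<And>x. is_maximal_in J Jp x \<Longrightarrow> x = p"
begin

abbreviation "N \<equiv> length vs"
definition "A = Jp - {p}"

lemma nth_inj: "i < N \<Longrightarrow> j < N \<Longrightarrow> vs ! i = vs ! j \<longleftrightarrow> i = j"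
  using dist by (simp add: nth_eq_iff_index_eq)

lemma inA: "a \<in> A \<longleftrightarrow> (\<exists>i. 0 < i \<and> i < N \<and> a = vs ! i)"
proof
  assume "a \<in> A"
  then obtain i where "i < N" "a = vs ! i" "a \<noteq> p" using setvs by (auto simp: A_def in_set_conv_nth)
  then show "\<exists>i. 0 < i \<and> i < N \<and> a = vs ! i" using p0 by (metis gr0I)
next
  assume "\<exists>i. 0 < i \<and> i < N \<and> a = vs ! i"
  then obtain i where "0 < i" "i < N" "a = vs ! i" by blast
  moreover have "vs ! i \<noteq> vs ! 0" using nth_inj[of i 0] \<open>0 < i\<close> \<open>i < N\<close> by (metis less_trans less_irrefl)
  ultimately show "a \<in> A" using setvs p0 by (auto simp: A_def)
qed

lemma nthA: "0 < i \<Longrightarrow> i < N \<Longrightarrow> vs ! i \<in> A"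
  using inA by blast

lemma pnotA: "p \<notin> A" by (simp add: A_def)
lemma pJp: "p \<in> Jp" using p0 nonempty setvs by auto

lemma cover: assumes "a \<in> A" shows "\<exists>c. (a, c) \<in> hasse J"
proof -
  have "\<not> is_maximal_in J Jp a" using maxp assms by (auto simp: A_def)
  then obtain y where "(a, y) \<in> J" "y \<noteq> a" using assms by (auto simp: is_maximal_in_def A_def)
  then have "(a, y) \<in> (hasse J)\<^sup>*" "a \<noteq> y" using po_hasse[OF po] by auto
  then show ?thesis by (metis converse_rtranclE)
qed

lemma edge: "Suc i < N \<Longrightarrow> (vs!i, vs!Suc i) \<in> hasse J \<or> (vs!Suc i, vs!i) \<in> hasse J"
proof -
  assume a: "Suc i < N"
  then have "hadj J (vs!i) (vs!Suc i)" using adjiff[of "vs!i" "vs!Suc i"] setvs by auto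
  then show ?thesis by (auto simp: hadj_def)
qed

lemma nbr: assumes "Suc i < N" "(vs ! Suc i, c) \<in> hasse J"
  shows "c = vs!i \<or> (Suc (Suc i) < N \<and> c = vs!Suc(Suc i))"
proof -
  have aA: "vs ! Suc i \<in> A" using nthA assms(1) by simp
  have h: "hadj J (vs ! Suc i) c" using assms(2) by (simp add: hadj_def)
  then have cJ: "c \<in> Jp" using comp aA by (auto simp: A_def)
  have "vs ! Suc i \<in> Jp" using aA by (simp add: A_def)
  then obtain m where m: "Suc m < N" "{vs!m, vs!Suc m} = {vs ! Suc i, c}"
    using adjiff[of "vs ! Suc i" c] h cJ by auto
  show ?thesis
  proof (cases "vs!m = vs ! Suc i")
    case True
    then have "m = Suc i" using nth_inj m(1) assms(1) by simp
    moreover have "c = vs ! Suc m"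
      using m(2) True nth_inj[of m "Suc m"] m(1) by (auto simp: doubleton_eq_iff)
    ultimately show ?thesis using m(1) by simp
  next
    case False
    then have "vs ! Suc m = vs ! Suc i" "c = vs ! m" using m(2) by (auto simp: doubleton_eq_iff)
    then have "m = i" using nth_inj m(1) assms(1) by simp
    then show ?thesis using \<open>c = vs ! m\<close> by simp
  qed
qed

lemma up_step: assumes "Suc i < N" "(vs!i, vs!Suc i) \<in> hasse J"
  shows "Suc (Suc i) < N \<and> (vs!Suc i, vs!Suc(Suc i)) \<in> hasse J"
proof -
  obtain c where c: "(vs ! Suc i, c) \<in> hasse J" using cover nthA assms(1) by blast
  have "c \<noteq> vs ! i"
  proof
    assume "c = vs ! i"
    then have "(vs ! Suc i, vs ! i) \<in> J" using hasse_J[OF c] by simp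
    then have "vs ! i = vs ! Suc i" using hasse_J[OF assms(2)] po_antisym[OF po] by blast
    then show False using nth_inj assms(1) by simp
  qed
  then show ?thesis using nbr[OF assms(1) c] c by auto
qed

lemma no_up: assumes "Suc i < N" shows "(vs!i, vs!Suc i) \<notin> hasse J"
proof
  assume u: "(vs!i, vs!Suc i) \<in> hasse J"
  have "\<forall>k. Suc (i + k) < N \<and> (vs!(i+k), vs!Suc (i+k)) \<in> hasse J"
  proof
    fix k show "Suc (i + k) < N \<and> (vs!(i+k), vs!Suc (i+k)) \<in> hasse J"
    proof (induction k)
      case 0 then show ?case using assms u by simp
    next
      case (Suc k) then show ?case using up_step[of "i+k"] by simp
    qed
  qed
  then have "Suc (i + (N - Suc i)) < N" by blast
  then show False using assms by simp
qed

lemma down: "Suc i < N \<Longrightarrow> (vs!Suc i, vs!i) \<in> hasse J"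
  using edge no_up by blast

lemma chainJ_le: "j \<le> i \<Longrightarrow> i < N \<Longrightarrow> (vs!i, vs!j) \<in> J"
proof (induction i)
  case 0 then show ?case using po_refl[OF po] by simp
next
  case (Suc i)
  show ?case
  proof (cases "j = Suc i")
    case True then show ?thesis using po_refl[OF po] by simp
  next
    case False
    then have "(vs!i, vs!j) \<in> J" using Suc by simp
    moreover have "(vs!Suc i, vs!i) \<in> J" using hasse_J[OF down] Suc.prems by blast
    ultimately show ?thesis using po_trans[OF po] by blast
  qed
qed

lemma chainJ: "i < N \<Longrightarrow> j < N \<Longrightarrow> (vs!i, vs!j) \<in> J \<longleftrightarrow> j \<le> i"
proof
  assume a: "i < N" "j < N" "(vs!i, vs!j) \<in> J"
  show "j \<le> i"
  proof (rule ccontr)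
    assume "\<not> j \<le> i"
    then have "(vs!j, vs!i) \<in> J" using chainJ_le a by simp
    then have "vs!i = vs!j" using a po_antisym[OF po] by blast
    then show False using nth_inj a \<open>\<not> j \<le> i\<close> by simp
  qed
qed (use chainJ_le in auto)


lemma L0: assumes "a \<in> A" shows "(a, p) \<in> J \<and> (p, a) \<notin> J"
proof -
  obtain i where i: "0 < i" "i < N" "a = vs ! i" using inA assms by blast
  then have "0 < N" by (metis less_trans)
  then show ?thesis using chainJ[of i 0] chainJ[of 0 i] i p0 by simp
qed

lemma L1: "(x, y) \<in> (hasse J)\<^sup>* \<Longrightarrow> x \<notin> A \<Longrightarrow> y \<notin> A"
proof (induction rule: rtrancl_induct)
  case base then show ?case .
next
  case (step y z)
  show ?case
  proof
    assume zA: "z \<in> A"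
    have "hadj J z y" using step(2) by (simp add: hadj_def)
    then have "y \<in> Jp" using comp zA by (auto simp: A_def)
    then have "y = p" using step by (auto simp: A_def)
    moreover have "(y, z) \<in> J" using hasse_sub[OF step(2)] by simp
    ultimately show False using L0[OF zA] by simp
  qed
qed

lemma L1': "x \<notin> A \<Longrightarrow> a \<in> A \<Longrightarrow> (x, a) \<notin> J"
proof
  assume "x \<notin> A" "a \<in> A" "(x, a) \<in> J"
  then have "(x, a) \<in> (hasse J)\<^sup>*" using po_hasse[OF po] by simp
  then show False using L1 \<open>x \<notin> A\<close> \<open>a \<in> A\<close> by blast
qed

lemma L2: "(x, y) \<in> (hasse J)\<^sup>* \<Longrightarrow> x \<in> A \<Longrightarrow> y \<in> A \<or> (p, y) \<in> J"
proof (induction rule: rtrancl_induct)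
  case base then show ?case by simp
next
  case (step y z)
  show ?case
  proof (cases "y \<in> A")
    case True
    have "hadj J y z" using step(2) by (simp add: hadj_def)
    then have "z \<in> Jp" using comp True by (auto simp: A_def)
    then show ?thesis using po_refl[OF po] by (auto simp: A_def)
  next
    case False
    then have "(p, y) \<in> J" using step by blast
    then show ?thesis using hasse_J[OF step(2)] po_trans[OF po] by blast
  qed
qed

lemma L2': "a \<in> A \<Longrightarrow> x \<notin> A \<Longrightarrow> (a, x) \<in> J \<longleftrightarrow> (p, x) \<in> J"
proof
  assume "a \<in> A" "x \<notin> A" "(a, x) \<in> J"
  then have "(a, x) \<in> (hasse J)\<^sup>*" using po_hasse[OF po] by simp
  then show "(p, x) \<in> J" using L2 \<open>x \<notin> A\<close> \<open>a \<in> A\<close> by blast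
next
  assume "a \<in> A" "(p, x) \<in> J"
  then show "(a, x) \<in> J" using L0 po_trans[OF po] by blast
qed

lemma rev_edge: "Suc i < N \<Longrightarrow> (vs!i, vs!Suc i) \<in> reversed_hasse J Jp"
proof -
  assume a: "Suc i < N"
  have "vs!i \<in> Jp" "vs!Suc i \<in> Jp" using a setvs nth_mem[of i vs] nth_mem[of "Suc i" vs] by auto
  then show ?thesis using down[OF a] unfolding reversed_hasse_def by blast
qed

lemma chainD: "i \<le> j \<Longrightarrow> j < N \<Longrightarrow> (vs!i, vs!j) \<in> delta Jp J"
proof (induction j)
  case 0 then show ?case by (simp add: delta_def)
next
  case (Suc j)
  show ?case
  proof (cases "i = Suc j")
    case True then show ?thesis by (simp add: delta_def)
  next
    case False
    then have "(vs!i, vs!j) \<in> delta Jp J" using Suc by simp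
    then show ?thesis using rev_edge[of j] Suc.prems unfolding delta_def by simp
  qed
qed

definition "D = {(x,y). x \<notin> A \<and> y \<notin> A \<and> (x,y) \<in> J} \<union> {(x,a). a \<in> A \<and> x \<notin> A \<and> (x,p) \<in> J}
   \<union> {(a,c). a \<in> A \<and> c \<in> A \<and> (c,a) \<in> J}"

lemma Dmem: "(x,y) \<in> D \<longleftrightarrow> (x \<notin> A \<and> y \<notin> A \<and> (x,y) \<in> J) \<or> (y \<in> A \<and> x \<notin> A \<and> (x,p) \<in> J) \<or> (x \<in> A \<and> y \<in> A \<and> (y,x) \<in> J)"
  unfolding D_def by blast

lemma delta_sub: "delta Jp J \<subseteq> D"
proof -
  have T: "\<And>a b c. (a,b)\<in>J \<Longrightarrow> (b,c)\<in>J \<Longrightarrow> (a,c)\<in>J" using po_trans[OF po] by blast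
  have r: "(x, y) \<in> D" if xy: "(x, y) \<in> reversed_hasse J Jp" for x y
  proof (cases "(x, y) \<in> hasse J \<and> \<not> (x \<in> Jp \<and> y \<in> Jp)")
    case True
    then have "hadj J x y" "hadj J y x" by (auto simp: hadj_def)
    then have "x \<notin> A" "y \<notin> A" using True comp unfolding A_def by blast+
    moreover have "(x, y) \<in> J" using hasse_J[of x y J] True by blast
    ultimately show ?thesis by (simp add: Dmem)
  next
    case False
    have "((x, y) \<in> hasse J \<and> \<not> (x \<in> Jp \<and> y \<in> Jp)) \<or> ((y, x) \<in> hasse J \<and> x \<in> Jp \<and> y \<in> Jp)"
      using xy unfolding reversed_hasse_def by blast
    then have h: "(y, x) \<in> hasse J" "x \<in> Jp" "y \<in> Jp" using False by blast+
    then have "x \<noteq> y" using hasse_ne[OF h(1)] by blast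
    have yx: "(y, x) \<in> J" using hasse_J[OF h(1)] .
    show ?thesis
    proof (cases "y = p")
      case True
      then have "x \<in> A" using \<open>x \<noteq> y\<close> h(2) by (simp add: A_def)
      then show ?thesis using L0[OF \<open>x \<in> A\<close>] yx True by simp
    next
      case False
      then have yA: "y \<in> A" using h(3) by (simp add: A_def)
      show ?thesis
      proof (cases "x = p")
        case True then show ?thesis using po_refl[OF po] yA pnotA by (simp add: Dmem)
      next
        case False
        then have "x \<in> A" using h(2) by (simp add: A_def)
        then show ?thesis using yA yx by (simp add: Dmem)
      qed
    qed
  qed
  have t: "(x, z) \<in> D" if "(x, y) \<in> D" "(y, z) \<in> D" for x y z
    using that unfolding Dmem
    by (cases "x \<in> A"; cases "y \<in> A"; cases "z \<in> A"; simp; metis T)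
  have "(x, y) \<in> (reversed_hasse J Jp)\<^sup>* \<Longrightarrow> (x, y) \<in> D" for x y
  proof (induction rule: rtrancl_induct)
    case base then show ?case using po_refl[OF po] by (simp add: Dmem)
  next
    case (step y z) then show ?case using r t by blast
  qed
  then show ?thesis unfolding delta_def by auto
qed

lemma part1: assumes "(x, y) \<in> J" "x \<notin> A" "y \<notin> A" shows "(x, y) \<in> delta Jp J"
proof -
  have "(x, y) \<in> (hasse J)\<^sup>*" using assms(1) po_hasse[OF po] by blast
  then have "y \<notin> A \<longrightarrow> (x, y) \<in> delta Jp J"
  proof (induction rule: rtrancl_induct)
    case base then show ?case by (simp add: delta_def)
  next
    case (step y z)
    show ?case
    proof
      assume zA: "z \<notin> A"
      have yA: "y \<notin> A" using L1 step(1) assms(2) by blast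
      have "(y, z) \<in> reversed_hasse J Jp"
      proof -
        have "y \<noteq> z" using hasse_ne[OF step(2)] by blast
        then have "\<not> (y \<in> Jp \<and> z \<in> Jp)" using yA zA by (auto simp: A_def)
        then show ?thesis using step(2) unfolding reversed_hasse_def by auto
      qed
      then show "(x, z) \<in> delta Jp J" using step yA unfolding delta_def by simp
    qed
  qed
  then show ?thesis using assms by simp
qed

lemma memD: "(x, y) \<in> delta Jp J \<longleftrightarrow> (x, y) \<in> D"
proof
  assume "(x, y) \<in> delta Jp J" then show "(x, y) \<in> D" using delta_sub by blast
next
  assume d: "(x, y) \<in> D"
  show "(x, y) \<in> delta Jp J"
  proof (cases "x \<notin> A \<and> y \<notin> A")
    case True
    then show ?thesis using d part1 by (auto simp: D_def)
  next
    case False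
    show ?thesis
    proof (cases "x \<notin> A")
      case True
      then have yA: "y \<in> A" "(x, p) \<in> J" using d False by (auto simp: D_def)
      then obtain i where i: "0 < i" "i < N" "y = vs!i" using inA by blast
      have "(x, p) \<in> delta Jp J" using part1 yA True pnotA by blast
      moreover have "(p, y) \<in> delta Jp J" using chainD[of 0 i] i p0 by simp
      ultimately show ?thesis unfolding delta_def by simp
    next
      case False
      then have xy: "x \<in> A" "y \<in> A" "(y, x) \<in> J" using d by (auto simp: D_def)
      then obtain i j where "0 < i" "i < N" "x = vs!i" "0 < j" "j < N" "y = vs!j" using inA by metis
      then show ?thesis using chainD chainJ xy(3) by simp
    qed
  qed
qed

definition "idx c = (THE i. i < N \<and> vs!i = c)"
lemma idx_nth: "i < N \<Longrightarrow> idx (vs!i) = i"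
  unfolding idx_def by (rule the_equality) (auto simp: nth_inj)

definition "sig c = vs ! (N - idx c)"

lemma sig_nth: "0 < i \<Longrightarrow> i < N \<Longrightarrow> sig (vs!i) = vs!(N-i) \<and> sig (vs!(N-i)) = vs!i"
  by (simp add: sig_def idx_nth)

lemma sigA: assumes "a \<in> A" shows "sig a \<in> A \<and> sig (sig a) = a"
proof -
  from assms obtain i where i: "0 < i" "i < N" "a = vs!i" using inA by blast
  then show ?thesis using sig_nth[OF i(1,2)] nthA[of "N-i"] by simp
qed

lemma sig_ord: assumes "a \<in> A" "c \<in> A" shows "(sig c, sig a) \<in> J \<longleftrightarrow> (a, c) \<in> J"
proof -
  from assms obtain i j where i: "0 < i" "i < N" "a = vs!i" "0 < j" "j < N" "c = vs!j" using inA by metis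
  then show ?thesis using sig_nth[OF i(1,2)] sig_nth[OF i(4,5)] chainJ by auto
qed

lemma data: "\<exists>\<alpha> \<beta> g. (\<forall>c. \<not> g c \<longrightarrow> \<alpha> c = c) \<and>
    (\<forall>c. g c \<longrightarrow> \<not> g (\<alpha> c) \<and> \<alpha> (\<alpha> c) = \<alpha> c \<and> g (\<beta> c) \<and> \<alpha> (\<beta> c) = \<alpha> c \<and> \<beta> (\<beta> c) = c) \<and>
    (\<forall>i j. incid_mat J $i$j = LinF (\<lambda>x y. incid_mat (delta Jp J) $x$y) \<alpha> \<beta> g i j)"
proof -
  define g where "g = (\<lambda>c. c \<in> A)"
  define a where "a = (\<lambda>c. if c \<in> A then p else c)"
  define b where "b = (\<lambda>c. if c \<in> A then sig c else c)"
  have 1: "\<forall>c. \<not> g c \<longrightarrow> a c = c" by (simp add: a_def g_def)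
  have 2: "\<forall>c. g c \<longrightarrow> \<not> g (a c) \<and> a (a c) = a c \<and> g (b c) \<and> a (b c) = a c \<and> b (b c) = c"
    using pnotA sigA by (simp add: a_def b_def g_def)
  have 3: "incid_mat J $i$j = LinF (\<lambda>x y. incid_mat (delta Jp J) $x$y) a b g i j" for i j
  proof (cases "i \<in> A"; cases "j \<in> A")
    assume "i \<in> A" "j \<in> A"
    then show ?thesis using sigA[of i] sigA[of j] sig_ord[of i j] pnotA po_refl[OF po]
      by (simp add: LinF_def incid_mat_def memD Dmem a_def b_def g_def)
  next
    assume "i \<in> A" "j \<notin> A"
    then show ?thesis using sigA[of i] L2'[of i j] pnotA po_refl[OF po]
      by (simp add: LinF_def incid_mat_def memD Dmem a_def b_def g_def)
  next
    assume "i \<notin> A" "j \<in> A"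
    then show ?thesis using sigA[of j] L1'[of i j] pnotA po_refl[OF po]
      by (simp add: LinF_def incid_mat_def memD Dmem a_def b_def g_def)
  next
    assume "i \<notin> A" "j \<notin> A"
    then show ?thesis by (simp add: LinF_def incid_mat_def memD Dmem a_def b_def g_def)
  qed
  show ?thesis using 1 2 3 by blast
qed

end



lemma hasse_conv: "hasse (R\<inverse>) = (hasse R)\<inverse>"
  unfolding hasse_def by auto
lemma hadj_conv: "hadj (R\<inverse>) = hadj R"
  by (auto simp: hadj_def hasse_conv fun_eq_iff)
lemma anchored_conv: "anchored_path (R\<inverse>) p Jp = anchored_path R p Jp"
  by (simp add: anchored_path_def is_component_on_def connected_on_def adj_on_def is_path_graph_on_def hadj_conv)
lemma inward_conv: "inward_anchored_path (R\<inverse>) p Jp = outward_anchored_path R p Jp"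
  by (simp add: inward_anchored_path_def outward_anchored_path_def anchored_conv is_maximal_in_def is_minimal_in_def)
lemma rh_conv: "reversed_hasse (R\<inverse>) Jp = (reversed_hasse R Jp)\<inverse>"
  unfolding reversed_hasse_def hasse_conv by auto
lemma delta_conv: "delta Jp (R\<inverse>) = (delta Jp R)\<inverse>"
  by (simp add: delta_def rh_conv rtrancl_converse)
lemma incid_conv: "incid_mat (R\<inverse>) $ i $ j = incid_mat R $ j $ i"
  by (simp add: incid_mat_def)

lemma rev_adj: "(\<exists>i. Suc i < length vs \<and> {rev vs!i, rev vs!Suc i} = S) \<longleftrightarrow> (\<exists>i. Suc i < length vs \<and> {vs!i, vs!Suc i} = S)"
proof
  assume "\<exists>i. Suc i < length vs \<and> {rev vs!i, rev vs!Suc i} = S"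
  then obtain i where i: "Suc i < length vs" "{rev vs!i, rev vs!Suc i} = S" by blast
  have e1: "rev vs ! i = vs ! Suc (length vs - 2 - i)" using i(1) by (simp add: rev_nth Suc_diff_Suc)
  have e2: "rev vs ! Suc i = vs ! (length vs - 2 - i)" using i(1) by (simp add: rev_nth)
  show "\<exists>i. Suc i < length vs \<and> {vs!i, vs!Suc i} = S"
    by (rule exI[of _ "length vs - 2 - i"]) (use i e1 e2 in \<open>auto simp: insert_commute\<close>)
next
  assume "\<exists>i. Suc i < length vs \<and> {vs!i, vs!Suc i} = S"
  then obtain i where i: "Suc i < length vs" "{vs!i, vs!Suc i} = S" by blast
  have e1: "rev vs ! (length vs - 2 - i) = vs ! Suc i" using i(1) by (simp add: rev_nth Suc_diff_Suc)
  have "length vs - Suc (Suc (length vs - 2 - i)) = i" using i(1) by arith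
  then have e2: "rev vs ! Suc (length vs - 2 - i) = vs ! i" using i(1) by (simp add: rev_nth)
  show "\<exists>i. Suc i < length vs \<and> {rev vs!i, rev vs!Suc i} = S"
    by (rule exI[of _ "length vs - 2 - i"]) (use i e1 e2 in \<open>auto simp: insert_commute\<close>)
qed


lemma path_start:
  assumes "is_path_graph_on R V" "p \<in> V" "card {y \<in> V. hadj R p y} = 1"
  shows "\<exists>vs. distinct vs \<and> set vs = V \<and>
      (\<forall>x\<in>V. \<forall>y\<in>V. hadj R x y \<longleftrightarrow> (\<exists>i. Suc i < length vs \<and> {vs ! i, vs ! Suc i} = {x, y})) \<and> vs ! 0 = p"
proof -
  obtain vs where vs: "distinct vs" "set vs = V"
    "\<forall>x\<in>V. \<forall>y\<in>V. hadj R x y \<longleftrightarrow> (\<exists>i. Suc i < length vs \<and> {vs ! i, vs ! Suc i} = {x, y})"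
    using assms(1) unfolding is_path_graph_on_def by (elim exE conjE) (rule that)
  have "p \<in> set vs" using assms(2) vs(2) by simp
  then obtain m where m: "m < length vs" "vs ! m = p" by (auto simp: in_set_conv_nth)
  show ?thesis
  proof (cases "m = 0")
    case True then show ?thesis using vs m by (intro exI[of _ vs] conjI) simp_all
  next
    case m0: False
    show ?thesis
    proof (cases "Suc m = length vs")
      case True
      have r3: "\<forall>x\<in>V. \<forall>y\<in>V. hadj R x y \<longleftrightarrow> (\<exists>i. Suc i < length (rev vs) \<and> {rev vs ! i, rev vs ! Suc i} = {x, y})"
        using vs(3) rev_adj[of vs] by simp
      have "rev vs ! 0 = vs ! (length vs - Suc 0)" using True by (subst rev_nth) auto
      moreover have "length vs - Suc 0 = m" using True by simp
      ultimately have "rev vs ! 0 = p" using m by simp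
      moreover have "distinct (rev vs)" "set (rev vs) = V" using vs by auto
      ultimately show ?thesis using r3 by (intro exI[of _ "rev vs"] conjI)
    next
      case False
      then have sm: "Suc m < length vs" using m(1) by simp
      have a1: "hadj R p (vs ! (m - 1))"
      proof -
        have "vs ! (m-1) \<in> V" using vs(2) m(1) by auto
        moreover have "Suc (m-1) < length vs" "{vs ! (m-1), vs ! Suc (m-1)} = {p, vs ! (m-1)}"
          using m m0 sm by auto
        then have "\<exists>i. Suc i < length vs \<and> {vs ! i, vs ! Suc i} = {p, vs ! (m-1)}" by (intro exI[of _ "m-1"] conjI)
        ultimately show ?thesis by (rule iffD2[OF vs(3)[rule_format, OF assms(2)]])
      qed
      have a2: "hadj R p (vs ! Suc m)"
      proof -
        have "vs ! Suc m \<in> V" using vs(2) sm by auto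
        moreover have "{vs ! m, vs ! Suc m} = {p, vs ! Suc m}" using m by auto
        then have "\<exists>i. Suc i < length vs \<and> {vs ! i, vs ! Suc i} = {p, vs ! Suc m}" using sm by (intro exI[of _ m] conjI)
        ultimately show ?thesis by (rule iffD2[OF vs(3)[rule_format, OF assms(2)]])
      qed
      have ne: "vs ! (m - 1) \<noteq> vs ! Suc m" using vs(1) sm m0 by (simp add: nth_eq_iff_index_eq)
      have sub: "{vs ! (m - 1), vs ! Suc m} \<subseteq> {y \<in> V. hadj R p y}"
        using a1 a2 vs(2) sm by auto
      have "finite {y \<in> V. hadj R p y}" by (rule finite_subset[of _ V]) (auto simp: vs(2)[symmetric])
      then have "card {vs ! (m - 1), vs ! Suc m} \<le> 1" using card_mono[OF _ sub] assms(3) by simp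
      then show ?thesis using ne by simp
    qed
  qed
qed

lemma inward_data:
  assumes "is_poset J" "inward_anchored_path J p Jp"
  shows "\<exists>\<alpha> \<beta> g. (\<forall>c. \<not> g c \<longrightarrow> \<alpha> c = c) \<and>
    (\<forall>c. g c \<longrightarrow> \<not> g (\<alpha> c) \<and> \<alpha> (\<alpha> c) = \<alpha> c \<and> g (\<beta> c) \<and> \<alpha> (\<beta> c) = \<alpha> c \<and> \<beta> (\<beta> c) = c) \<and>
    (\<forall>i j. incid_mat J $i$j = LinF (\<lambda>x y. incid_mat (delta Jp J) $x$y) \<alpha> \<beta> g i j)"
proof -
  have an: "anchored_path J p Jp" and mx: "\<And>x. is_maximal_in J Jp x \<Longrightarrow> x = p"
    using assms(2) unfolding inward_anchored_path_def by auto
  have pJ: "p \<in> Jp" and cmp: "is_component_on J (UNIV - {p}) (Jp - {p})"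
    and pg: "is_path_graph_on J Jp" and deg: "card {y \<in> Jp. hadj J p y} = 1"
    using an unfolding anchored_path_def by auto
  obtain vs where vs: "distinct vs" "set vs = Jp"
    "\<forall>x\<in>Jp. \<forall>y\<in>Jp. hadj J x y \<longleftrightarrow> (\<exists>i. Suc i < length vs \<and> {vs ! i, vs ! Suc i} = {x, y})" "vs ! 0 = p"
    using path_start[OF pg pJ deg] by blast
  have cc: "\<forall>x\<in>Jp-{p}. \<forall>y\<in>UNIV-{p}. hadj J x y \<longrightarrow> y \<in> Jp-{p}"
    using cmp unfolding is_component_on_def by (elim conjE)
  have comp: "y \<in> Jp" if "x \<in> Jp - {p}" "hadj J x y" for x y
  proof (cases "y = p")
    case True then show ?thesis using pJ by simp
  next
    case False
    then have "y \<in> UNIV - {p}" by simp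
    then show ?thesis using cc that by blast
  qed
  have po: "partial_order_on UNIV J" using assms(1) by (simp add: is_poset_def)
  have ne: "vs \<noteq> []" using vs(2) pJ by auto
  have adj: "hadj J x y \<longleftrightarrow> (\<exists>i. Suc i < length vs \<and> {vs!i, vs!Suc i} = {x,y})" if "x \<in> Jp" "y \<in> Jp" for x y
    by (rule vs(3)[rule_format, OF that])
  interpret inw J p Jp vs
    by (rule inw.intro[OF po vs(1) vs(2) adj vs(4) ne comp mx])
  show ?thesis by (rule data)
qed

theorem lemma3p3:
  fixes J :: "('n::finite \<times> 'n) set" and p :: 'n and Jp :: "'n set"
  assumes "is_poset J"
    and "inward_anchored_path J p Jp \<or> outward_anchored_path J p Jp"
  shows "strongly_gram_Z_congruent J (delta Jp J) \<and>
         (\<forall>r::nat. nonneg_corank J r \<longleftrightarrow> nonneg_corank (delta Jp J) r)"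
  using assms(2)
proof
  assume "inward_anchored_path J p Jp"
  note iw = this
  obtain \<alpha> \<beta> g where d: "\<forall>c. \<not> g c \<longrightarrow> \<alpha> c = c"
    "\<forall>c. g c \<longrightarrow> \<not> g (\<alpha> c) \<and> \<alpha> (\<alpha> c) = \<alpha> c \<and> g (\<beta> c) \<and> \<alpha> (\<beta> c) = \<alpha> c \<and> \<beta> (\<beta> c) = c"
    "\<forall>i j. incid_mat J $i$j = LinF (\<lambda>x y. incid_mat (delta Jp J) $x$y) \<alpha> \<beta> g i j"
    using inward_data[OF assms(1) iw] by (elim exE conjE) (rule that)
  show ?thesis by (rule final[of g \<alpha> \<beta>]) (use d in auto)
next
  assume "outward_anchored_path J p Jp"
  then have iw: "inward_anchored_path (J\<inverse>) p Jp" by (simp add: inward_conv)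
  have po: "is_poset (J\<inverse>)" using assms(1) by (simp add: is_poset_def)
  obtain \<alpha> \<beta> g where d: "\<forall>c. \<not> g c \<longrightarrow> \<alpha> c = c"
    "\<forall>c. g c \<longrightarrow> \<not> g (\<alpha> c) \<and> \<alpha> (\<alpha> c) = \<alpha> c \<and> g (\<beta> c) \<and> \<alpha> (\<beta> c) = \<alpha> c \<and> \<beta> (\<beta> c) = c"
    "\<forall>i j. incid_mat (J\<inverse>) $i$j = LinF (\<lambda>x y. incid_mat (delta Jp (J\<inverse>)) $x$y) \<alpha> \<beta> g i j"
    using inward_data[OF po iw] by (elim exE conjE) (rule that)
  have c: "incid_mat J $i$j = LinF (\<lambda>x y. incid_mat (delta Jp J) $x$y) \<alpha> \<beta> g i j" for i j
  proof -
    have "incid_mat J $i$j = incid_mat (J\<inverse>) $j$i" by (simp add: incid_conv)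
    also have "\<dots> = LinF (\<lambda>x y. incid_mat (delta Jp J) $y$x) \<alpha> \<beta> g j i"
      using d(3) by (simp add: delta_conv incid_conv)
    also have "\<dots> = LinF (\<lambda>x y. incid_mat (delta Jp J) $x$y) \<alpha> \<beta> g i j"
      by (rule LinF_transpose)
    finally show ?thesis .
  qed
  show ?thesis by (rule final[of g \<alpha> \<beta>]) (use d c in auto)
qed


end
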